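(* Fix a constant $\Delta$. There is no LCL problem on trees of maximum degree at most $\Delta$ with mending radius between $\omega(1)$ and $o(\log n)$: if such an LCL problem $\Pi$ is $T$-mendable for some function $T$ with $T(n)=o(\log n)$, then $\Pi$ is $T'$-mendable for some constant function $T'$.
   Context: A locally verifiable problem $\Pi$ on a graph family $\mathcal{G}$ is given by a set $\Sigma$ of input labels, a set $\Gamma$ of output labels and a verifier $\psi$ with verification radius $r$: $\psi(G,\lambda,v)\in\{\text{happy},\text{unhappy}\}$ depends only on the radius-$r$ neighborhood of $v$ (structure, inputs and outputs, up to isomorphism); $\lambda:V\to\Gamma$ is a solution if $\psi$ is happy everywhere. $\Pi$ is an LCL problem if $\Sigma,\Gamma$ are finite and all graphs in $\mathcal{G}$ have maximum degree bounded by a constant. Partial labelings are maps $\lambda:V\to\Gamma\cup\{\bot\}$; the relaxed verifier $\psi^*$ is happy at $v$ if some node within distance $r$ of $v$ has label $\bot$, and otherwise $\psi^*(G,\lambda,v)=\psi(G,\lambda',v)$ for any $\lambda':V\to\Gamma$ agreeing with $\lambda$ on the radius-$r$ neighborhood of $v$; $\psi^*$ accepts $\lambda$ if happy everywhere. Given $\lambda$ accepted by $\psi^*$ and node $v$, a $t$-mend of $\lambda$ at $v$ is a partial labeling $\mu$ accepted by $\psi^*$ with $\mu(v)\neq\bot$, $\mu(u)=\bot\Rightarrow\lambda(u)=\bot$, and $\mu(u)\neq\lambda(u)\Rightarrow\mathrm{dist}(u,v)\le t$. A verifier is $T$-mendable if for every $G\in\mathcal{G}$ with $n$ nodes, every $\lambda$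 accepted by $\psi^*$ and every node $v$, a $T(n)$-mend at $v$ exists; $\Pi$ is $T$-mendable if some radius-$r$ verifier for $\Pi$ (accepting exactly the solutions of $\Pi$) is $T$-mendable. *)

theory Defs
  imports Main "HOL-Library.Landau_Symbols"
begin

definition walk_len :: "(nat \<Rightarrow> nat \<Rightarrow> bool) \<Rightarrow> nat \<Rightarrow> nat \<Rightarrow> nat \<Rightarrow> bool" where
  "walk_len E u v k \<longleftrightarrow> (\<exists>ps. length ps = Suc k \<and> hd ps = u \<and> last ps = v \<and>
      (\<forall>i<k. E (ps ! i) (ps ! Suc i)))"

definition dist_le :: "(nat \<Rightarrow> nat \<Rightarrow> bool) \<Rightarrow> nat \<Rightarrow> nat \<Rightarrow> nat \<Rightarrow> bool" where
  "dist_le E u v t \<longleftrightarrow> (\<exists>k\<le>t. walk_len E u v k)"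

definition ball :: "nat set \<Rightarrow> (nat \<Rightarrow> nat \<Rightarrow> bool) \<Rightarrow> nat \<Rightarrow> nat \<Rightarrow> nat set" where
  "ball V E v r = {u \<in> V. dist_le E v u r}"

definition is_graph :: "nat set \<Rightarrow> (nat \<Rightarrow> nat \<Rightarrow> bool) \<Rightarrow> bool" where
  "is_graph V E \<longleftrightarrow> finite V \<and> (\<forall>u v. E u v \<longrightarrow> u \<in> V \<and> v \<in> V \<and> E v u \<and> u \<noteq> v)"

definition connected_graph :: "nat set \<Rightarrow> (nat \<Rightarrow> nat \<Rightarrow> bool) \<Rightarrow> bool" where
  "connected_graph V E \<longleftrightarrow> (\<forall>u\<in>V. \<forall>v\<in>V. \<exists>k. walk_len E u v k)"

definition has_cycle :: "(nat \<Rightarrow> nat \<Rightarrow> bool) \<Rightarrow> bool" where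
  "has_cycle E \<longleftrightarrow> (\<exists>cs. length cs \<ge> 3 \<and> distinct cs \<and>
      (\<forall>i<length cs. E (cs ! i) (cs ! ((i + 1) mod length cs))))"

definition is_tree :: "nat set \<Rightarrow> (nat \<Rightarrow> nat \<Rightarrow> bool) \<Rightarrow> bool" where
  "is_tree V E \<longleftrightarrow> is_graph V E \<and> V \<noteq> {} \<and> connected_graph V E \<and> \<not> has_cycle E"

definition max_deg_le :: "nat set \<Rightarrow> (nat \<Rightarrow> nat \<Rightarrow> bool) \<Rightarrow> nat \<Rightarrow> bool" where
  "max_deg_le V E \<Delta> \<longleftrightarrow> (\<forall>v\<in>V. card {u. E v u} \<le> \<Delta>)"

definition tree_family :: "nat \<Rightarrow> nat set \<Rightarrow> (nat \<Rightarrow> nat \<Rightarrow> bool) \<Rightarrow> bool" where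
  "tree_family \<Delta> V E \<longleftrightarrow> is_tree V E \<and> max_deg_le V E \<Delta>"

type_synonym ('i,'o) verifier =
  "nat set \<Rightarrow> (nat \<Rightarrow> nat \<Rightarrow> bool) \<Rightarrow> (nat \<Rightarrow> 'i) \<Rightarrow> (nat \<Rightarrow> 'o) \<Rightarrow> nat \<Rightarrow> bool"
  (* True = happy *)

definition local_verifier :: "nat \<Rightarrow> nat \<Rightarrow> ('i,'o) verifier \<Rightarrow> bool" where
  "local_verifier \<Delta> r \<psi> \<longleftrightarrow>
    (\<forall>V1 E1 in1 out1 v1 V2 E2 in2 out2 v2 f.
       tree_family \<Delta> V1 E1 \<and> tree_family \<Delta> V2 E2 \<and> v1 \<in> V1 \<and> v2 \<in> V2 \<and>
       bij_betw f (ball V1 E1 v1 r) (ball V2 E2 v2 r) \<and> f v1 = v2 \<and>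
       (\<forall>x\<in>ball V1 E1 v1 r. \<forall>y\<in>ball V1 E1 v1 r. E1 x y \<longleftrightarrow> E2 (f x) (f y)) \<and>
       (\<forall>x\<in>ball V1 E1 v1 r. in1 x = in2 (f x) \<and> out1 x = out2 (f x))
     \<longrightarrow> \<psi> V1 E1 in1 out1 v1 = \<psi> V2 E2 in2 out2 v2)"

definition accepts :: "('i,'o) verifier \<Rightarrow> nat set \<Rightarrow> (nat \<Rightarrow> nat \<Rightarrow> bool) \<Rightarrow> (nat \<Rightarrow> 'i)
    \<Rightarrow> (nat \<Rightarrow> 'o) \<Rightarrow> bool" where
  "accepts \<psi> V E inp lab \<longleftrightarrow> (\<forall>v\<in>V. \<psi> V E inp lab v)"

text \<open>Partial labelings: None plays the role of \<bottom>. Relaxed verifier \<psi>*.\<close>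
definition relaxed :: "nat \<Rightarrow> ('i,'o) verifier \<Rightarrow> nat set \<Rightarrow> (nat \<Rightarrow> nat \<Rightarrow> bool) \<Rightarrow> (nat \<Rightarrow> 'i)
    \<Rightarrow> (nat \<Rightarrow> 'o option) \<Rightarrow> nat \<Rightarrow> bool" where
  "relaxed r \<psi> V E inp \<mu> v \<longleftrightarrow>
     (\<exists>u\<in>ball V E v r. \<mu> u = None) \<or>
     (\<forall>lab'. (\<forall>u\<in>ball V E v r. \<mu> u = Some (lab' u)) \<longrightarrow> \<psi> V E inp lab' v)"

definition accepts_relaxed :: "nat \<Rightarrow> ('i,'o) verifier \<Rightarrow> nat set \<Rightarrow> (nat \<Rightarrow> nat \<Rightarrow> bool)
    \<Rightarrow> (nat \<Rightarrow> 'i) \<Rightarrow> (nat \<Rightarrow> 'o option) \<Rightarrow> bool" where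
  "accepts_relaxed r \<psi> V E inp \<mu> \<longleftrightarrow> (\<forall>v\<in>V. relaxed r \<psi> V E inp \<mu> v)"

definition is_mend :: "nat \<Rightarrow> ('i,'o) verifier \<Rightarrow> nat set \<Rightarrow> (nat \<Rightarrow> nat \<Rightarrow> bool) \<Rightarrow> (nat \<Rightarrow> 'i)
    \<Rightarrow> (nat \<Rightarrow> 'o option) \<Rightarrow> nat \<Rightarrow> nat \<Rightarrow> (nat \<Rightarrow> 'o option) \<Rightarrow> bool" where
  "is_mend r \<psi> V E inp lab v t \<mu> \<longleftrightarrow>
     accepts_relaxed r \<psi> V E inp \<mu> \<and> \<mu> v \<noteq> None \<and>
     (\<forall>u\<in>V. \<mu> u = None \<longrightarrow> lab u = None) \<and>
     (\<forall>u\<in>V. \<mu> u \<noteq> lab u \<longrightarrow> dist_le E u v t)"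

definition mendable_verifier :: "nat \<Rightarrow> nat \<Rightarrow> ('i,'o) verifier \<Rightarrow> (nat \<Rightarrow> nat) \<Rightarrow> bool" where
  "mendable_verifier \<Delta> r \<psi> T \<longleftrightarrow>
     (\<forall>V E inp lab v. tree_family \<Delta> V E \<and> accepts_relaxed r \<psi> V E inp lab \<and> v \<in> V
        \<longrightarrow> (\<exists>\<mu>. is_mend r \<psi> V E inp lab v (T (card V)) \<mu>))"

text \<open>The LCL problem \<Pi> on the family is given by a radius-r local verifier \<psi>
  (finite label sets are the finite types 'i, 'o; bounded degree by \<Delta>).
  \<Pi> is T-mendable iff some local verifier accepting exactly the solutions of \<Pi>
  is T-mendable.\<close>
definition problem_mendable :: "nat \<Rightarrow> nat \<Rightarrow> ('i,'o) verifier \<Rightarrow> (nat \<Rightarrow> nat) \<Rightarrow> bool" where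
  "problem_mendable \<Delta> r \<psi> T \<longleftrightarrow>
     (\<exists>r' \<psi>'. local_verifier \<Delta> r' \<psi>' \<and>
        (\<forall>V E inp lab. tree_family \<Delta> V E \<longrightarrow> (accepts \<psi>' V E inp lab \<longleftrightarrow> accepts \<psi> V E inp lab)) \<and>
        mendable_verifier \<Delta> r' \<psi>' T)"

end

theory Submission
  imports Defs
begin

lemma walk0: "walk_len E u v 0 \<longleftrightarrow> u = v"
proof
  assume "walk_len E u v 0"
  then obtain ps where "length ps = 1" "hd ps = u" "last ps = v" unfolding walk_len_def by auto
  then show "u = v" by (cases ps) auto
next
  assume "u = v" then show "walk_len E u v 0" unfolding walk_len_def by (intro exI[of _ "[u]"]) auto
qed

lemma walkS: "walk_len E u w (Suc k) \<longleftrightarrow> (\<exists>x. walk_len E u x k \<and> E x w)"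
proof
  assume "walk_len E u w (Suc k)"
  then obtain ps where ps: "length ps = Suc (Suc k)" "hd ps = u" "last ps = w"
    "\<forall>i<Suc k. E (ps ! i) (ps ! Suc i)" unfolding walk_len_def by blast
  define qs where "qs = butlast ps"
  have l: "length qs = Suc k" using ps by (simp add: qs_def)
  have nth: "\<And>i. i < Suc k \<Longrightarrow> qs ! i = ps ! i" unfolding qs_def using ps(1)
    by (simp add: nth_butlast)
  have "hd qs = u" using ps l nth[of 0] by (metis hd_conv_nth list.size(3) nat.distinct(1) zero_less_Suc)
  moreover have "last qs = ps ! k" proof -
    have "qs \<noteq> []" using l by auto
    then have "last qs = qs ! (length qs - 1)" by (rule last_conv_nth)
    then show ?thesis using l nth[of k] by simp
  qed
  moreover have "\<forall>i<k. E (qs ! i) (qs ! Suc i)" using ps(4) nth by auto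
  moreover have "E (ps ! k) w" using ps(4)[rule_format, of k] ps(1,3)
    by (metis diff_Suc_1 last_conv_nth lessI list.size(3) nat.distinct(1))
  ultimately show "\<exists>x. walk_len E u x k \<and> E x w" unfolding walk_len_def using l by blast
next
  assume "\<exists>x. walk_len E u x k \<and> E x w"
  then obtain x ps where ps: "length ps = Suc k" "hd ps = u" "last ps = x"
    "\<forall>i<k. E (ps ! i) (ps ! Suc i)" "E x w" unfolding walk_len_def by blast
  have "length (ps @ [w]) = Suc (Suc k)" using ps by simp
  moreover have "hd (ps @ [w]) = u" using ps by (cases ps) auto
  moreover have "last (ps @ [w]) = w" by simp
  moreover have "\<forall>i<Suc k. E ((ps@[w]) ! i) ((ps@[w]) ! Suc i)"
  proof (intro allI impI)
    fix i assume i: "i < Suc k"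
    show "E ((ps@[w]) ! i) ((ps@[w]) ! Suc i)"
    proof (cases "i < k")
      case True then show ?thesis using ps i by (simp add: nth_append)
    next
      case False then have "i = k" using i by simp
      have "ps \<noteq> []" using ps by auto
      then have "last ps = ps ! (length ps - 1)" by (rule last_conv_nth)
      then have "ps ! k = x" using ps by simp
      then show ?thesis using ps \<open>i = k\<close> by (simp add: nth_append)
    qed
  qed
  ultimately show "walk_len E u w (Suc k)" unfolding walk_len_def by blast
qed

lemma walk_concat: "walk_len E a b k \<Longrightarrow> walk_len E b c m \<Longrightarrow> walk_len E a c (k + m)"
proof (induction m arbitrary: c)
  case 0 then show ?case by (simp add: walk0)
next
  case (Suc m) then show ?case by (auto simp: walkS)
qed

lemma walk_cons: "E z a \<Longrightarrow> walk_len E a b k \<Longrightarrow> walk_len E z b (Suc k)"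
proof -
  assume "E z a" "walk_len E a b k"
  moreover have "walk_len E z a 1" using \<open>E z a\<close> by (simp add: walkS walk0)
  ultimately show ?thesis using walk_concat[of E z a 1 b k] by simp
qed

lemma walk_rev: assumes sym: "\<And>x y. E x y \<Longrightarrow> E y x"
  shows "walk_len E u w k \<Longrightarrow> walk_len E w u k"
proof (induction k arbitrary: w)
  case 0 then show ?case by (simp add: walk0)
next
  case (Suc k)
  then obtain x where "walk_len E u x k" "E x w" by (auto simp: walkS)
  then show ?case using Suc.IH sym walk_cons by metis
qed

lemma walk_mono: assumes "\<And>x y. E x y \<Longrightarrow> E' x y"
  shows "walk_len E u w k \<Longrightarrow> walk_len E' u w k"
  by (induction k arbitrary: w) (auto simp: walk0 walkS intro: assms)

lemma dist_trans: "dist_le E a b k \<Longrightarrow> dist_le E b c m \<Longrightarrow> dist_le E a c (k + m)"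
  unfolding dist_le_def by (meson add_le_mono walk_concat)

lemma dist_sym: "(\<And>x y. E x y \<Longrightarrow> E y x) \<Longrightarrow> dist_le E u w k \<Longrightarrow> dist_le E w u k"
  unfolding dist_le_def using walk_rev by metis

lemma dist_mono: "dist_le E u w k \<Longrightarrow> k \<le> m \<Longrightarrow> dist_le E u w m"
  unfolding dist_le_def by (meson order_trans)

lemma dist_refl: "dist_le E u u k"
  unfolding dist_le_def using walk0 by blast

definition sub :: "(nat \<Rightarrow> nat \<Rightarrow> bool) \<Rightarrow> nat set \<Rightarrow> nat \<Rightarrow> nat \<Rightarrow> bool" where
  "sub E B = (\<lambda>x y. E x y \<and> x \<in> B \<and> y \<in> B)"

lemma walk_sub:
  assumes g: "is_graph V E" and d: "dist_le E v w a" and wV: "w \<in> V"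
  shows "walk_len E w u k \<Longrightarrow> a + k \<le> R \<Longrightarrow> walk_len (sub E (ball V E v R)) w u k"
proof (induction k arbitrary: u)
  case 0 then show ?case by (simp add: walk0)
next
  case (Suc k)
  then obtain x where x: "walk_len E w x k" "E x u" by (auto simp: walkS)
  have IH: "walk_len (sub E (ball V E v R)) w x k" using Suc x by simp
  have "dist_le E w x k" using x unfolding dist_le_def by auto
  then have dx: "dist_le E v x (a + k)" using d dist_trans by blast
  have "dist_le E w u (Suc k)" using Suc.prems unfolding dist_le_def by auto
  then have du: "dist_le E v u (a + Suc k)" using d dist_trans by blast
  have "x \<in> V" "u \<in> V" using g x unfolding is_graph_def by auto
  then have "x \<in> ball V E v R" "u \<in> ball V E v R" using dx du Suc.prems
    unfolding ball_def by (auto intro: dist_mono)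
  then show ?case using IH x unfolding sub_def by (auto simp: walkS)
qed

lemma ball_subset: "ball V E v R \<subseteq> V" unfolding ball_def by auto

lemma ball_eq:
  assumes g: "is_graph V E" and d: "dist_le E v w a" and wV: "w \<in> V" and le: "a + s \<le> R"
  shows "ball (ball V E v R) (sub E (ball V E v R)) w s = ball V E w s"
proof
  show "ball (ball V E v R) (sub E (ball V E v R)) w s \<subseteq> ball V E w s"
  proof
    fix u assume "u \<in> ball (ball V E v R) (sub E (ball V E v R)) w s"
    then obtain k where "k \<le> s" "walk_len (sub E (ball V E v R)) w u k" "u \<in> V"
      unfolding ball_def dist_le_def by auto
    moreover then have "walk_len E w u k" using walk_mono[of "sub E (ball V E v R)" E] by (auto simp: sub_def)
    ultimately show "u \<in> ball V E w s" unfolding ball_def dist_le_def by auto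
  qed
next
  show "ball V E w s \<subseteq> ball (ball V E v R) (sub E (ball V E v R)) w s"
  proof
    fix u assume u: "u \<in> ball V E w s"
    then obtain k where k: "k \<le> s" "walk_len E w u k" unfolding ball_def dist_le_def by auto
    have "walk_len (sub E (ball V E v R)) w u k" using walk_sub[OF g d wV k(2)] k le by simp
    moreover have "dist_le E v u (a + s)" using d u dist_trans unfolding ball_def by blast
    ultimately show "u \<in> ball (ball V E v R) (sub E (ball V E v R)) w s"
      using u k le unfolding ball_def dist_le_def by (auto intro: order_trans)
  qed
qed

lemma ball_card:
  assumes g: "is_graph V E" and md: "max_deg_le V E D"
  shows "card (ball V E v R) \<le> (D + 1) ^ R"
proof (induction R)
  case 0
  have "ball V E v 0 \<subseteq> {v}" unfolding ball_def dist_le_def by (auto simp: walk0)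
  then have "card (ball V E v 0) \<le> card {v}" by (intro card_mono) auto
  then show ?case by simp
next
  case (Suc R)
  let ?B = "ball V E v R"
  have fin: "finite ?B" using g ball_subset finite_subset unfolding is_graph_def by metis
  have sub1: "ball V E v (Suc R) \<subseteq> ?B \<union> (\<Union>x\<in>?B. {u. E x u})"
  proof
    fix u assume "u \<in> ball V E v (Suc R)"
    then obtain k where k: "k \<le> Suc R" "walk_len E v u k" "u \<in> V" unfolding ball_def dist_le_def by auto
    show "u \<in> ?B \<union> (\<Union>x\<in>?B. {u. E x u})"
    proof (cases k)
      case 0 then show ?thesis using k unfolding ball_def dist_le_def by auto
    next
      case (Suc j)
      then obtain x where "walk_len E v x j" "E x u" using k by (auto simp: walkS)
      moreover then have "x \<in> V" using g unfolding is_graph_def by auto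
      ultimately have "x \<in> ?B" using k Suc unfolding ball_def dist_le_def by auto
      then show ?thesis using \<open>E x u\<close> by auto
    qed
  qed
  have finN: "\<And>x. finite {u. E x u}" using g unfolding is_graph_def
    by (metis (no_types, lifting) finite_subset mem_Collect_eq subsetI)
  have "card (\<Union>x\<in>?B. {u. E x u}) \<le> (\<Sum>x\<in>?B. card {u. E x u})" by (rule card_UN_le[OF fin])
  also have "\<dots> \<le> (\<Sum>x\<in>?B. D)" using md ball_subset unfolding max_deg_le_def
    by (intro sum_mono) blast
  also have "\<dots> = card ?B * D" by simp
  finally have c2: "card (\<Union>x\<in>?B. {u. E x u}) \<le> card ?B * D" .
  have "card (ball V E v (Suc R)) \<le> card (?B \<union> (\<Union>x\<in>?B. {u. E x u}))"
    using sub1 fin finN by (intro card_mono) auto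
  also have "\<dots> \<le> card ?B + card ?B * D" using card_Un_le c2 by (meson add_le_mono le_refl order_trans)
  also have "\<dots> = card ?B * (D + 1)" by simp
  also have "\<dots> \<le> (D+1)^R * (D+1)" using Suc.IH by (intro mult_le_mono) auto
  also have "\<dots> = (D+1)^Suc R" by (simp only: power_Suc mult.commute)
  finally show ?case .
qed

lemma ball_tree:
  assumes t: "tree_family D V E" and v: "v \<in> V"
  shows "tree_family D (ball V E v R) (sub E (ball V E v R))"
proof -
  let ?B = "ball V E v R" and ?E = "sub E (ball V E v R)"
  have g: "is_graph V E" using t unfolding tree_family_def is_tree_def by auto
  have g': "is_graph ?B ?E" using g ball_subset finite_subset unfolding is_graph_def sub_def by metis
  have ne: "?B \<noteq> {}" using v dist_refl unfolding ball_def by blast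
  have symE: "\<And>x y. ?E x y \<Longrightarrow> ?E y x" using g' unfolding is_graph_def by blast
  have reach: "\<And>u. u \<in> ?B \<Longrightarrow> \<exists>k. walk_len ?E v u k"
  proof -
    fix u assume "u \<in> ?B"
    then obtain k where "k \<le> R" "walk_len E v u k" unfolding ball_def dist_le_def by auto
    then have "walk_len ?E v u k" using walk_sub[OF g dist_refl[of E v 0] v] by simp
    then show "\<exists>k. walk_len ?E v u k" by blast
  qed
  have conn: "connected_graph ?B ?E" unfolding connected_graph_def
  proof (intro ballI)
    fix x y assume "x \<in> ?B" "y \<in> ?B"
    then obtain k m where "walk_len ?E v x k" "walk_len ?E v y m" using reach by blast
    moreover have "walk_len ?E x v k" using walk_rev[of ?E, OF symE] \<open>walk_len ?E v x k\<close> by blast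
    ultimately show "\<exists>k. walk_len ?E x y k" using walk_concat by blast
  qed
  have nc: "\<not> has_cycle ?E" using t unfolding tree_family_def is_tree_def has_cycle_def sub_def by blast
  have md: "max_deg_le ?B ?E D"
    unfolding max_deg_le_def
  proof
    fix x assume x: "x \<in> ?B"
    have "finite {u. E x u}" using g unfolding is_graph_def
      by (metis (no_types, lifting) finite_subset mem_Collect_eq subsetI)
    then have "card {u. ?E x u} \<le> card {u. E x u}" by (intro card_mono) (auto simp: sub_def)
    also have "\<dots> \<le> D" using t x ball_subset unfolding tree_family_def max_deg_le_def by blast
    finally show "card {u. ?E x u} \<le> D" .
  qed
  show ?thesis unfolding tree_family_def is_tree_def using g' ne conn nc md by blast
qed

lemma relaxed_transfer:
  assumes "ball V E w s = ball V' E' w s" "\<forall>u\<in>ball V E w s. \<mu> u = \<mu>' u"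
    "\<forall>lab'. \<psi> V E inp lab' w = \<psi> V' E' inp lab' w"
  shows "relaxed s \<psi> V E inp \<mu> w = relaxed s \<psi> V' E' inp \<mu>' w"
  using assms unfolding relaxed_def by auto

lemma verdict:
  assumes loc: "local_verifier D s \<psi>" and t: "tree_family D V E" and v: "v \<in> V"
    and w: "w \<in> ball V E v R"
    and beq: "ball (ball V E v R) (sub E (ball V E v R)) w s = ball V E w s"
  shows "\<psi> (ball V E v R) (sub E (ball V E v R)) inp lab' w = \<psi> V E inp lab' w"
proof -
  have t': "tree_family D (ball V E v R) (sub E (ball V E v R))" using ball_tree[OF t v] .
  have "w \<in> V" using w ball_subset by blast
  moreover have "bij_betw (\<lambda>x. x) (ball (ball V E v R) (sub E (ball V E v R)) w s) (ball V E w s)"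
    using beq by (simp add: bij_betw_def)
  moreover have "\<forall>x\<in>ball (ball V E v R) (sub E (ball V E v R)) w s. \<forall>y\<in>ball (ball V E v R) (sub E (ball V E v R)) w s.
      sub E (ball V E v R) x y \<longleftrightarrow> E x y"
    unfolding sub_def ball_def by auto
  ultimately show ?thesis using t t' w
    by (intro loc[unfolded local_verifier_def, rule_format, where f="\<lambda>x. x"]) auto
qed

lemma landau_step:
  assumes o: "(\<lambda>n. real (T n)) \<in> o(\<lambda>n. ln (real n))"
  shows "\<exists>n0. \<forall>n\<ge>n0. (D+1)^(2*T n) \<le> (n::nat)"
proof (cases "D = 0")
  case True then show ?thesis by (intro exI[of _ 1]) auto
next
  case False
  define a where "a = real (D + 1)"
  have a2: "a \<ge> 2" using False unfolding a_def by simp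
  have la: "ln a > 0" using a2 by simp
  have "\<forall>\<^sub>F n in at_top. norm (real (T n)) \<le> (1 / (2 * ln a)) * norm (ln (real n))"
    using landau_o.smallD[OF o, of "1 / (2 * ln a)"] la by simp
  then obtain n0 where n0: "\<And>n. n \<ge> n0 \<Longrightarrow> norm (real (T n)) \<le> (1 / (2 * ln a)) * norm (ln (real n))"
    unfolding eventually_at_top_linorder by blast
  show ?thesis
  proof (intro exI[of _ "max n0 1"] allI impI)
    fix n :: nat assume n: "max n0 1 \<le> n"
    then have n1: "real n \<ge> 1" by simp
    have "real (T n) \<le> (1 / (2 * ln a)) * ln (real n)" using n0[of n] n n1 by simp
    then have "2 * real (T n) * ln a \<le> ln (real n)" using la by (simp add: field_simps)
    then have "ln (a ^ (2 * T n)) \<le> ln (real n)" using a2 by (simp add: ln_realpow)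
    then have "a ^ (2 * T n) \<le> real n" using a2 n1 by (subst (asm) ln_le_cancel_iff) auto
    then show "(D+1)^(2*T n) \<le> n" unfolding a_def by (metis of_nat_le_iff of_nat_power)
  qed
qed

theorem corollary8p4:
  fixes \<Delta> r :: nat
    and \<psi> :: "('i::finite, 'o::finite) verifier"
    and T :: "nat \<Rightarrow> nat"
  assumes "local_verifier \<Delta> r \<psi>"
    and "problem_mendable \<Delta> r \<psi> T"
    and "(\<lambda>n. real (T n)) \<in> o(\<lambda>n. ln (real n))"
  shows "\<exists>c::nat. problem_mendable \<Delta> r \<psi> (\<lambda>_. c)"
proof -
  obtain s and \<phi> :: "('i, 'o) verifier" where loc: "local_verifier \<Delta> s \<phi>"
    and same: "\<forall>V E inp lab. tree_family \<Delta> V E \<longrightarrow> (accepts \<phi> V E inp lab \<longleftrightarrow> accepts \<psi> V E inp lab)"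
    and mv: "mendable_verifier \<Delta> s \<phi> T"
    using assms(2) unfolding problem_mendable_def by blast
  obtain n0 where n0: "\<And>n. n \<ge> n0 \<Longrightarrow> (\<Delta>+1)^(2*T n) \<le> n"
    using landau_step[OF assms(3), of \<Delta>] by blast
  define a where "a = \<Delta> + 1"
  have a1: "a \<ge> 1" unfolding a_def by simp
  define C where "C = Max (T ` {..n0})"
  define N where "N = n0 + a^(C+3*s) + a^(6*s)"
  define c where "c = Max (T ` {..N})"
  have Tle: "\<And>n. n \<le> N \<Longrightarrow> T n \<le> c" unfolding c_def by simp
  have cle: "a^(c+3*s) \<le> N"
  proof -
    have "c \<in> T ` {..N}" unfolding c_def by (intro Max_in) auto
    then obtain m where m: "m \<le> N" "c = T m" by auto
    show ?thesis
    proof (cases "m \<le> n0")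
      case True
      then have "c \<le> C" unfolding C_def m(2) by simp
      then have "a^(c+3*s) \<le> a^(C+3*s)" using a1 by (intro power_increasing) auto
      then show ?thesis unfolding N_def by simp
    next
      case False
      then have "a^(2*c) \<le> N" using n0[of m] m unfolding a_def by simp
      moreover have "a^(6*s) \<le> N" unfolding N_def by simp
      ultimately have "a^(2*c) * a^(6*s) \<le> N * N" by (intro mult_le_mono)
      moreover have "(a^(c+3*s))^2 = a^(2*c) * a^(6*s)"
        by (simp add: power_mult[symmetric] power_add[symmetric] algebra_simps)
      ultimately have "(a^(c+3*s))^2 \<le> N^2" by (simp add: power2_eq_square)
      then show ?thesis using power2_le_imp_le by blast
    qed
  qed
  have "mendable_verifier \<Delta> s \<phi> (\<lambda>_. c)"
    unfolding mendable_verifier_def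
  proof (intro allI impI, elim conjE)
    fix V E inp lab v
    assume t: "tree_family \<Delta> V E" and acc: "accepts_relaxed s \<phi> V E inp lab" and vV: "v \<in> V"
    define R where "R = c + 3*s"
    define B where "B = ball V E v R"
    define E' where "E' = sub E B"
    have g: "is_graph V E" using t unfolding tree_family_def is_tree_def by auto
    have symE: "\<And>x y. E x y \<Longrightarrow> E y x" using g unfolding is_graph_def by blast
    define labB where "labB u = (if dist_le E v u (R - s) then lab u else None)" for u
    have tB: "tree_family \<Delta> B E'" unfolding B_def E'_def by (rule ball_tree[OF t vV])
    have vB: "v \<in> B" unfolding B_def ball_def using vV dist_refl by blast
    have BV: "B \<subseteq> V" unfolding B_def by (rule ball_subset)
    have "card B \<le> a^R" unfolding B_def a_def using ball_card[OF g] t unfolding tree_family_def by blast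
    then have "card B \<le> N" using cle unfolding R_def by simp
    then have tc: "T (card B) \<le> c" by (rule Tle)
    have accB: "accepts_relaxed s \<phi> B E' inp labB"
      unfolding accepts_relaxed_def
    proof
      fix w assume wB: "w \<in> B"
      then have wV: "w \<in> V" using BV by auto
      show "relaxed s \<phi> B E' inp labB w"
      proof (cases "dist_le E v w (R - s)")
        case True
        have beq: "ball B E' w s = ball V E w s" unfolding B_def E'_def
          by (rule ball_eq[OF g True wV]) (simp add: R_def)
        show ?thesis
        proof (cases "\<exists>u\<in>ball B E' w s. labB u = None")
          case True then show ?thesis unfolding relaxed_def by blast
        next
          case False
          then have agree: "\<forall>u\<in>ball V E w s. lab u = labB u" using beq unfolding labB_def by auto
          have ver: "\<forall>lab'. \<phi> V E inp lab' w = \<phi> B E' inp lab' w"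
            using verdict[OF loc t vV, of w R inp] wB beq unfolding B_def E'_def by simp
          have "relaxed s \<phi> V E inp lab w" using acc wV unfolding accepts_relaxed_def by blast
          then show ?thesis using relaxed_transfer[where V=V and E=E and V'=B and E'=E' and \<psi>=\<phi> and inp=inp and w=w and s=s, OF beq[symmetric] agree ver] by simp
        qed
      next
        case False
        then have "labB w = None" unfolding labB_def by simp
        moreover have "w \<in> ball B E' w s" unfolding ball_def using wB dist_refl by blast
        ultimately show ?thesis unfolding relaxed_def by blast
      qed
    qed
    obtain \<mu>' where mend: "is_mend s \<phi> B E' inp labB v (T (card B)) \<mu>'"
      using mv tB accB vB unfolding mendable_verifier_def by blast
    define t' where "t' = T (card B)"
    have tc': "t' \<le> c" using tc unfolding t'_def .
    define \<mu> where "\<mu> u = (if u \<in> B \<and> \<mu>' u \<noteq> labB u then \<mu>' u else lab u)" for u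
    have Dd: "dist_le E u v t'" if "u \<in> B" "\<mu>' u \<noteq> labB u" for u
    proof -
      have "dist_le E' u v t'" using mend that unfolding is_mend_def t'_def by blast
      then show ?thesis unfolding dist_le_def E'_def sub_def using walk_mono[of "sub E B" E]
        by (auto simp: sub_def)
    qed
    have Dd': "dist_le E v u t'" if "u \<in> B" "\<mu>' u \<noteq> labB u" for u
      using dist_sym[OF symE Dd[OF that]] by simp
    have labBeq: "labB u = lab u" if "dist_le E v u k" "k \<le> R - s" for u k
      using that unfolding labB_def by (auto intro: dist_mono)
    have "accepts_relaxed s \<phi> V E inp \<mu>"
      unfolding accepts_relaxed_def
    proof
      fix w assume wV: "w \<in> V"
      show "relaxed s \<phi> V E inp \<mu> w"
      proof (cases "\<exists>u\<in>ball V E w s. u \<in> B \<and> \<mu>' u \<noteq> labB u")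
        case True
        then obtain u where u: "u \<in> ball V E w s" "u \<in> B" "\<mu>' u \<noteq> labB u" by blast
        have "dist_le E w u s" using u unfolding ball_def by simp
        then have "dist_le E u w s" using dist_sym[of E, OF symE] by blast
        then have "dist_le E v w (t' + s)" using Dd'[OF u(2,3)] dist_trans by blast
        then have dvw: "dist_le E v w (t' + s)" .
        have wB: "w \<in> B" unfolding B_def ball_def using wV dvw tc' by (auto simp: R_def intro: dist_mono)
        have beq: "ball B E' w s = ball V E w s" unfolding B_def E'_def
          by (rule ball_eq[OF g dvw wV]) (use tc' in \<open>simp add: R_def\<close>)
        have agree: "\<forall>x\<in>ball V E w s. \<mu> x = \<mu>' x"
        proof
          fix x assume x: "x \<in> ball V E w s"
          then have dx: "dist_le E v x (t' + s + s)" using dvw dist_trans unfolding ball_def by blast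
          then have "labB x = lab x" using tc' by (intro labBeq[OF dx]) (simp add: R_def)
          moreover have "x \<in> B" using x beq unfolding ball_def by auto
          ultimately show "\<mu> x = \<mu>' x" unfolding \<mu>_def by auto
        qed
        have ver: "\<forall>lab'. \<phi> V E inp lab' w = \<phi> B E' inp lab' w"
          using verdict[OF loc t vV, of w R inp] wB beq unfolding B_def E'_def by simp
        have "relaxed s \<phi> B E' inp \<mu>' w" using mend wB unfolding is_mend_def accepts_relaxed_def by blast
        then show ?thesis using relaxed_transfer[where V=V and E=E and V'=B and E'=E' and \<psi>=\<phi> and inp=inp and w=w and s=s, OF beq[symmetric] agree ver] by simp
      next
        case False
        then have agree: "\<forall>x\<in>ball V E w s. \<mu> x = lab x" unfolding \<mu>_def by auto
        have "relaxed s \<phi> V E inp lab w" using acc wV unfolding accepts_relaxed_def by blast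
        then show ?thesis using relaxed_transfer[where V=V and E=E and V'=V and E'=E and \<psi>=\<phi> and inp=inp and w=w and s=s, OF refl agree] by simp
      qed
    qed
    moreover have "\<mu> v \<noteq> None"
    proof -
      have "labB v = lab v" using labBeq[OF dist_refl[of E v 0]] by simp
      then show ?thesis using mend vB unfolding \<mu>_def is_mend_def by auto
    qed
    moreover have "\<forall>u\<in>V. \<mu> u = None \<longrightarrow> lab u = None"
    proof (intro ballI impI)
      fix u assume uV: "u \<in> V" and n: "\<mu> u = None"
      show "lab u = None"
      proof (cases "u \<in> B \<and> \<mu>' u \<noteq> labB u")
        case True
        then have "labB u = lab u" using labBeq[OF Dd'] tc' by (simp add: R_def)
        moreover have "labB u = None" using mend True n unfolding is_mend_def \<mu>_def by auto
        ultimately show ?thesis by simp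
      next
        case False then show ?thesis using n unfolding \<mu>_def by (simp split: if_splits)
      qed
    qed
    moreover have "\<forall>u\<in>V. \<mu> u \<noteq> lab u \<longrightarrow> dist_le E u v c"
    proof (intro ballI impI)
      fix u assume "u \<in> V" "\<mu> u \<noteq> lab u"
      then have "u \<in> B" "\<mu>' u \<noteq> labB u" unfolding \<mu>_def by (auto split: if_splits)
      then show "dist_le E u v c" using Dd tc' dist_mono by blast
    qed
    ultimately show "\<exists>\<mu>. is_mend s \<phi> V E inp lab v c \<mu>" unfolding is_mend_def by blast
  qed
  then have "problem_mendable \<Delta> r \<psi> (\<lambda>_. c)"
    unfolding problem_mendable_def using loc same by blast
  then show ?thesis by blast
qed

end
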